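(* Let $V$ be a $5$-dimensional complex vector space, $G=G(2,V)\subset P(\Lambda^2V)$ Plücker-embedded, $H_1,H_2\subset\Lambda^2V$ hyperplanes, $V_8=H_1\cap H_2$, with $G_4=G\cap P(V_8)$ smooth, and let $\Omega\subset P(V_8)$ be a quadric such that the threefold $X=G_4\cap\Omega$ is smooth everywhere except at one point $t$, which is an ordinary double point. Then there exists a quadric cone $\Omega'\subset P(V_8)$ with vertex $t$ such that $X=G_4\cap\Omega'$. *)

theory Defs
  imports "HOL-Analysis.Analysis" "HOL-Library.Numeral_Type"
begin

text \<open>V = C^5 with basis indexed by the type 5.  The ambient space of Lambda^2 V is
  modelled inside complex^(5 x 5); Lambda^2 V itself is the subspace of skew-symmetric
  elements (x $ (i,j) is the Pluecker coordinate p_ij).  All linear algebra is over the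
  complex numbers (vec.span, vec.subspace, vec.dim use complex scalar multiplication).\<close>

type_synonym L2 = "complex ^ (5 \<times> 5)"

definition Lam2 :: "L2 set" where
  "Lam2 = {x. \<forall>i j. x $ (i, j) = - x $ (j, i)}"

definition hyperplane_Lam2 :: "L2 set \<Rightarrow> bool" where
  "hyperplane_Lam2 H \<longleftrightarrow> vec.subspace H \<and> H \<subseteq> Lam2 \<and> vec.dim H = 9"

text \<open>Quadruples i<j<k<l indexing the Pluecker quadrics (4x4 Pfaffians).\<close>
definition quadr4 :: "(5 \<times> 5 \<times> 5 \<times> 5) set" where
  "quadr4 = {(i, j, k, l). i < j \<and> j < k \<and> k < l}"

fun pf :: "5 \<times> 5 \<times> 5 \<times> 5 \<Rightarrow> L2 \<Rightarrow> complex" where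
  "pf (i, j, k, l) x = x $ (i, j) * x $ (k, l) - x $ (i, k) * x $ (j, l) + x $ (i, l) * x $ (j, k)"

text \<open>Homogeneous quadratic forms on the ambient space (a quadric in P(S) is given by
  such a form not vanishing identically on S).\<close>
definition is_quadratic_form :: "(L2 \<Rightarrow> complex) \<Rightarrow> bool" where
  "is_quadratic_form q \<longleftrightarrow> (\<exists>M. \<forall>x. q x = (\<Sum>a\<in>UNIV. \<Sum>b\<in>UNIV. M a b * x $ a * x $ b))"

text \<open>Differential at x, applied to w, of a quadratic form f (for a homogeneous quadratic
  polynomial this is exactly f(x+w) - f(x) - f(w), i.e. twice the polar form).\<close>
definition dq :: "(L2 \<Rightarrow> complex) \<Rightarrow> L2 \<Rightarrow> L2 \<Rightarrow> complex" where
  "dq f x w = f (x + w) - f x - f w"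

text \<open>Affine cone over G(2,V) \<inter> P(S), cut out by the Pluecker quadrics.\<close>
definition pl_cone :: "L2 set \<Rightarrow> L2 set" where
  "pl_cone S = {x \<in> S. \<forall>k\<in>quadr4. pf k x = 0}"

text \<open>Zariski tangent space (affine cone version) at x of G(2,V) \<inter> P(S).\<close>
definition tangent_G :: "L2 set \<Rightarrow> L2 \<Rightarrow> L2 set" where
  "tangent_G S x = {w \<in> S. \<forall>k\<in>quadr4. dq (pf k) x w = 0}"

text \<open>Affine cone over X = G(2,V) \<inter> P(S) \<inter> {q = 0} and its Zariski tangent space.\<close>
definition X_cone :: "L2 set \<Rightarrow> (L2 \<Rightarrow> complex) \<Rightarrow> L2 set" where
  "X_cone S q = {x \<in> pl_cone S. q x = 0}"

definition tangent_X :: "L2 set \<Rightarrow> (L2 \<Rightarrow> complex) \<Rightarrow> L2 \<Rightarrow> L2 set" where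
  "tangent_X S q x = {w \<in> tangent_G S x. dq q x w = 0}"

text \<open>Ordinary double point of X at [t] (X a hypersurface section q=0 of the smooth
  variety G(2,V) \<inter> P(S)): q restricted to the cone M over G \<inter> P(S) is critical at t
  (Lagrange multipliers lam), and the Hessian of q|M at t, namely the polar form of
  q - \<Sum> lam_k pf_k restricted to T_t M, has kernel exactly the Euler line C t
  (i.e. the Hessian is nondegenerate transversally to the cone direction).\<close>
definition ordinary_double_point :: "L2 set \<Rightarrow> (L2 \<Rightarrow> complex) \<Rightarrow> L2 \<Rightarrow> bool" where
  "ordinary_double_point S q t \<longleftrightarrow>
     t \<in> X_cone S q \<and> t \<noteq> 0 \<and>
     (\<exists>lam :: 5 \<times> 5 \<times> 5 \<times> 5 \<Rightarrow> complex.
        (\<forall>w\<in>S. dq q t w = (\<Sum>k\<in>quadr4. lam k * dq (pf k) t w)) \<and>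
        vec.dim {u \<in> tangent_G S t. \<forall>w\<in>tangent_G S t.
                   dq (\<lambda>y. q y - (\<Sum>k\<in>quadr4. lam k * pf k y)) u w = 0} = 1)"

end

theory Submission
  imports Defs
begin

lemma qf_prod: "is_quadratic_form (\<lambda>x. x $ a * x $ b)"
  unfolding is_quadratic_form_def
proof (rule exI[of _ "\<lambda>c d. if c = a \<and> d = b then 1 else 0"], intro allI)
  fix x :: L2
  have e: "\<And>c d. (if c = a \<and> d = b then 1 else 0) * x $ c * x $ d
      = (if d = b then (if c = a then x $ a * x $ b else 0) else 0)" by auto
  then show "x $ a * x $ b = (\<Sum>c\<in>UNIV. \<Sum>d\<in>UNIV. (if c = a \<and> d = b then 1 else 0) * x $ c * x $ d)"
    by (simp only: e) (simp add: sum.delta)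
qed

lemma qf_diff: "is_quadratic_form f \<Longrightarrow> is_quadratic_form g \<Longrightarrow> is_quadratic_form (\<lambda>x. f x - g x)"
  unfolding is_quadratic_form_def
proof (elim exE)
  fix M N assume M: "\<forall>x. f x = (\<Sum>a\<in>UNIV. \<Sum>b\<in>UNIV. M a b * x $ a * x $ b)"
    and N: "\<forall>x. g x = (\<Sum>a\<in>UNIV. \<Sum>b\<in>UNIV. N a b * x $ a * x $ b)"
  show "\<exists>K. \<forall>x. f x - g x = (\<Sum>a\<in>UNIV. \<Sum>b\<in>UNIV. K a b * x $ a * x $ b)"
    by (rule exI[of _ "\<lambda>a b. M a b - N a b"]) (simp add: M N algebra_simps sum_subtractf)
qed

lemma qf_add: "is_quadratic_form f \<Longrightarrow> is_quadratic_form g \<Longrightarrow> is_quadratic_form (\<lambda>x. f x + g x)"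
  unfolding is_quadratic_form_def
proof (elim exE)
  fix M N assume M: "\<forall>x. f x = (\<Sum>a\<in>UNIV. \<Sum>b\<in>UNIV. M a b * x $ a * x $ b)"
    and N: "\<forall>x. g x = (\<Sum>a\<in>UNIV. \<Sum>b\<in>UNIV. N a b * x $ a * x $ b)"
  show "\<exists>K. \<forall>x. f x + g x = (\<Sum>a\<in>UNIV. \<Sum>b\<in>UNIV. K a b * x $ a * x $ b)"
    by (rule exI[of _ "\<lambda>a b. M a b + N a b"]) (simp add: M N algebra_simps sum.distrib)
qed

lemma qf_scale: "is_quadratic_form f \<Longrightarrow> is_quadratic_form (\<lambda>x. c * f x)"
  unfolding is_quadratic_form_def
proof (elim exE)
  fix M assume M: "\<forall>x. f x = (\<Sum>a\<in>UNIV. \<Sum>b\<in>UNIV. M a b * x $ a * x $ b)"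
  show "\<exists>K. \<forall>x. c * f x = (\<Sum>a\<in>UNIV. \<Sum>b\<in>UNIV. K a b * x $ a * x $ b)"
    by (rule exI[of _ "\<lambda>a b. c * M a b"]) (simp add: M algebra_simps sum_distrib_left)
qed

lemma qf_zero: "is_quadratic_form (\<lambda>x. 0)"
  unfolding is_quadratic_form_def by (rule exI[of _ "\<lambda>a b. 0"]) simp

lemma qf_sum: "finite A \<Longrightarrow> (\<And>k. k \<in> A \<Longrightarrow> is_quadratic_form (f k)) \<Longrightarrow>
   is_quadratic_form (\<lambda>x. \<Sum>k\<in>A. f k x)"
proof (induction A rule: finite_induct)
  case empty then show ?case by (simp add: qf_zero)
next
  case (insert a A) then show ?case by (simp add: qf_add)
qed

lemma qf_pf: "is_quadratic_form (pf k)"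
proof -
  obtain i j l m where k: "k = (i, j, l, m)" by (cases k) auto
  have "is_quadratic_form (\<lambda>x. x $ (i, j) * x $ (l, m) - x $ (i, l) * x $ (j, m) + x $ (i, m) * x $ (j, l))"
    by (intro qf_add qf_diff qf_prod)
  then show ?thesis unfolding k by (simp add: pf.simps[abs_def])
qed

theorem lemma5p7:
  fixes H1 H2 :: "L2 set" and q :: "L2 \<Rightarrow> complex" and t :: L2
  assumes hyp1: "hyperplane_Lam2 H1" and hyp2: "hyperplane_Lam2 H2" and distinct: "H1 \<noteq> H2"
    and G4_smooth: "\<forall>x\<in>pl_cone (H1 \<inter> H2). x \<noteq> 0 \<longrightarrow> vec.dim (tangent_G (H1 \<inter> H2) x) = 5"
    and quadric: "is_quadratic_form q" "\<exists>x\<in>H1 \<inter> H2. q x \<noteq> 0"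
    and smooth_off_t: "\<forall>x\<in>X_cone (H1 \<inter> H2) q. x \<noteq> 0 \<and> x \<notin> vec.span {t}
                          \<longrightarrow> vec.dim (tangent_X (H1 \<inter> H2) q x) = 4"
    and t_singular: "vec.dim (tangent_X (H1 \<inter> H2) q t) \<noteq> 4"
    and node: "ordinary_double_point (H1 \<inter> H2) q t"
  shows "\<exists>q'. is_quadratic_form q' \<and> (\<exists>x\<in>H1 \<inter> H2. q' x \<noteq> 0)
              \<and> (\<forall>w\<in>H1 \<inter> H2. dq q' t w = 0)
              \<and> (\<exists>c::complex. c \<noteq> 0 \<and> (\<forall>x\<in>pl_cone (H1 \<inter> H2). q' x = c * q x))"
proof -
  let ?S = "H1 \<inter> H2"
  from node obtain lam where tX: "t \<in> X_cone ?S q" and t0: "t \<noteq> 0"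
    and crit: "\<forall>w\<in>?S. dq q t w = (\<Sum>k\<in>quadr4. lam k * dq (pf k) t w)"
    and hess: "vec.dim {u \<in> tangent_G ?S t. \<forall>w\<in>tangent_G ?S t.
                   dq (\<lambda>y. q y - (\<Sum>k\<in>quadr4. lam k * pf k y)) u w = 0} = 1"
    unfolding ordinary_double_point_def by blast
  define q' where "q' = (\<lambda>y. q y - (\<Sum>k\<in>quadr4. lam k * pf k y))"
  have sub: "vec.subspace ?S" using hyp1 hyp2 unfolding hyperplane_Lam2_def
    by (simp add: vec.subspace_inter)
  have dqlin: "dq q' x w = dq q x w - (\<Sum>k\<in>quadr4. lam k * dq (pf k) x w)" for x w
    unfolding q'_def dq_def by (simp add: algebra_simps sum_subtractf sum_distrib_left sum.distrib)
  have qfq': "is_quadratic_form q'"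
    unfolding q'_def by (intro qf_diff quadric(1) qf_sum qf_scale qf_pf) auto
  have nz: "\<exists>x\<in>?S. q' x \<noteq> 0"
  proof (rule ccontr)
    assume "\<not> ?thesis"
    then have z: "\<forall>x\<in>?S. q' x = 0" by blast
    have "{u \<in> tangent_G ?S t. \<forall>w\<in>tangent_G ?S t. dq q' u w = 0} = tangent_G ?S t"
    proof safe
      fix u w assume u: "u \<in> tangent_G ?S t" and w: "w \<in> tangent_G ?S t"
      have "u \<in> ?S" "w \<in> ?S" using u w unfolding tangent_G_def by auto
      then have "u + w \<in> ?S" using sub vec.subspace_add by blast
      then show "dq q' u w = 0" unfolding dq_def using z \<open>u \<in> ?S\<close> \<open>w \<in> ?S\<close> by simp
    qed
    moreover have "t \<in> pl_cone ?S" using tX unfolding X_cone_def by auto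
    then have "vec.dim (tangent_G ?S t) = 5" using G4_smooth t0 by blast
    ultimately show False using hess unfolding q'_def by simp
  qed
  have "\<forall>w\<in>?S. dq q' t w = 0" using crit dqlin by simp
  moreover have "\<forall>x\<in>pl_cone ?S. q' x = 1 * q x"
    unfolding q'_def pl_cone_def by simp
  ultimately show ?thesis using qfq' nz by (intro exI[of _ q'] conjI exI[of _ 1]) auto
qed

end
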